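(* Let $\lambda>0$, $\gamma>2$, $c>0$ and $\rho>0$ be fixed, and let $W_e>0$. Define $$g(r)=r^{-\gamma-2}\Big(\gamma^2+\frac{4W_e}{c^2}r^2\Big),\qquad Z(s)=\int_0^\infty\big[1-e^{-s g(r)}\big]r\,dr,\qquad \mathrm{CRB}_{\mathrm{LB}}=\frac{4}{\rho}\int_0^\infty e^{-2\pi\lambda Z(s)}\,ds,$$ and $$\mathrm{CRB}_{\mathrm{LB,W}}=\frac{c^2(\pi\lambda)^{-\gamma/2}}{\rho W_e}\,\Gamma^{-\gamma/2}\Big(1-\frac{2}{\gamma}\Big)\,\Gamma\Big(1+\frac{\gamma}{2}\Big).$$ Then $$\Big(1-\frac{\pi\lambda c^2\gamma}{2W_e}\Big)\mathrm{CRB}_{\mathrm{LB,W}}<\mathrm{CRB}_{\mathrm{LB}}<\mathrm{CRB}_{\mathrm{LB,W}}.$$ Hence $\mathrm{CRB}_{\mathrm{LB}}/\mathrm{CRB}_{\mathrm{LB,W}}\to 1$ as $W_e\to\infty$, with convergence rate $O(1/W_e)$.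
   Context: Here $\lambda$ is the sensor density of a homogeneous Poisson point process of sensors, $\gamma$ is the path-loss exponent, $c$ is the speed of light, $\rho$ is a signal-to-noise ratio constant, and $W_e$ is the effective bandwidth of the transmitted signal. $\Gamma$ denotes the Gamma function, and $\Gamma^{-\gamma/2}(z)$ means $\Gamma(z)^{-\gamma/2}$. *)

theory Defs
  imports "HOL-Analysis.Analysis" "HOL-Library.Landau_Symbols"
begin

definition gfun :: "real \<Rightarrow> real \<Rightarrow> real \<Rightarrow> real \<Rightarrow> real" where
  "gfun \<gamma> c We r = r powr (-\<gamma> - 2) * (\<gamma>^2 + 4 * We / c^2 * r^2)"

definition Zfun :: "real \<Rightarrow> real \<Rightarrow> real \<Rightarrow> real \<Rightarrow> real" where
  "Zfun \<gamma> c We s = (\<integral>r\<in>{0<..}. (1 - exp (- s * gfun \<gamma> c We r)) * r \<partial>lborel)"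

definition CRB_LB :: "real \<Rightarrow> real \<Rightarrow> real \<Rightarrow> real \<Rightarrow> real \<Rightarrow> real" where
  "CRB_LB lam \<gamma> c \<rho> We =
     4 / \<rho> * (\<integral>s\<in>{0<..}. exp (- 2 * pi * lam * Zfun \<gamma> c We s) \<partial>lborel)"

definition CRB_LBW :: "real \<Rightarrow> real \<Rightarrow> real \<Rightarrow> real \<Rightarrow> real \<Rightarrow> real" where
  "CRB_LBW lam \<gamma> c \<rho> We =
     c^2 * (pi * lam) powr (- \<gamma> / 2) / (\<rho> * We)
     * Gamma (1 - 2 / \<gamma>) powr (- \<gamma> / 2) * Gamma (1 + \<gamma> / 2)"

end

theory Submission
  imports Defs "HOL-Real_Asymp.Real_Asymp"
begin



lemma L1:
  fixes x :: real assumes x: "x \<ge> 0"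
  shows "(\<integral>\<^sup>+t. ennreal (indicator {0<..x} t * exp(-t)) \<partial>lborel) = ennreal (1 - exp(-x))"
proof -
  have "((\<lambda>t. exp(-t)) has_integral ((\<lambda>t. - exp(-t)) x - (\<lambda>t. - exp(-t)) 0)) {0..x}"
    by (rule fundamental_theorem_of_calculus[OF x])
       (auto intro!: derivative_eq_intros simp: has_real_derivative_iff_has_vector_derivative[symmetric])
  then have "(\<integral>\<^sup>+t. ennreal (indicator {0..x} t * exp(-t)) \<partial>lborel) = ennreal (1 - exp(-x))"
    by (subst nn_integral_has_integral_lebesgue) auto
  moreover have "(\<integral>\<^sup>+t. ennreal (indicator {0<..x} t * exp(-t)) \<partial>lborel) = (\<integral>\<^sup>+t. ennreal (indicator {0..x} t * exp(-t)) \<partial>lborel)"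
    by (intro nn_integral_cong_AE eventually_mono[OF AE_lborel_singleton[of 0]])
       (auto simp: indicator_def)
  ultimately show ?thesis by simp
qed

lemma inner_r:
  fixes R :: real assumes R: "R \<ge> 0"
  shows "(\<integral>\<^sup>+r. ennreal (indicator {0<..R} r * r) \<partial>lborel) = ennreal (R^2/2)"
proof -
  have "(\<integral>\<^sup>+r. ennreal (indicator {0..R} r * r) \<partial>lborel) = ennreal (R^2/2)"
    using ident_has_integral[OF R] by (subst nn_integral_has_integral_lebesgue) auto
  moreover have "(\<integral>\<^sup>+r. ennreal (indicator {0<..R} r * r) \<partial>lborel) = (\<integral>\<^sup>+r. ennreal (indicator {0..R} r * r) \<partial>lborel)"
    by (intro nn_integral_cong) (auto simp: indicator_def)
  ultimately show ?thesis by simp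
qed

lemma L2:
  fixes y :: real
  shows "(\<integral>\<^sup>+t. ennreal (indicator {y..} t * exp(-t)) \<partial>lborel) = ennreal (exp(-y))"
proof -
  have lim: "((\<lambda>t::real. - exp(-t)) \<longlongrightarrow> 0) at_top" by real_asymp
  have "(\<integral>\<^sup>+t. ennreal (exp(-t)) * indicator {y..} t \<partial>lborel) = ennreal (0 - (- exp(-y)))"
    by (rule nn_integral_FTC_atLeast[where F="\<lambda>t. - exp(-t)", OF _ _ _ lim])
       (auto intro!: derivative_eq_intros)
  moreover have "(\<integral>\<^sup>+t. ennreal (indicator {y..} t * exp(-t)) \<partial>lborel) = (\<integral>\<^sup>+t. ennreal (exp(-t)) * indicator {y..} t \<partial>lborel)"
    by (intro nn_integral_cong) (auto simp: indicator_def)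
  ultimately show ?thesis by simp
qed


lemma powr_le_iff_base:
  fixes x y p :: real assumes "x \<ge> 0" "y \<ge> 0" "p > 0"
  shows "x powr p \<le> y powr p \<longleftrightarrow> x \<le> y"
  using assms by (meson less_le_not_le linorder_le_less_linear powr_less_mono2 powr_mono2)

lemma iff1:
  fixes r t b \<gamma> :: real assumes "r>0" "t>0" "b>0" "\<gamma>>0"
  shows "t \<le> b * r powr -\<gamma> \<longleftrightarrow> r \<le> (b/t) powr (1/\<gamma>)"
proof -
  have "t \<le> b * r powr -\<gamma> \<longleftrightarrow> r powr \<gamma> \<le> b/t"
    using assms by (simp add: powr_minus field_simps)
  also have "\<dots> \<longleftrightarrow> (r powr \<gamma>) powr (1/\<gamma>) \<le> (b/t) powr (1/\<gamma>)"
    using assms by (subst powr_le_iff_base) auto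
  also have "(r powr \<gamma>) powr (1/\<gamma>) = r" using assms by (simp add: powr_powr)
  finally show ?thesis .
qed

lemma LC1:
  fixes b \<gamma> :: real assumes b: "b > 0" and g: "\<gamma> > 2"
  shows "(\<integral>\<^sup>+r. ennreal (indicator {0<..} r * ((1 - exp(-(b * r powr -\<gamma>))) * r)) \<partial>lborel)
     = ennreal (b powr (2/\<gamma>) / 2 * Gamma (1 - 2/\<gamma>))"
proof -
  define f where "f = (\<lambda>(r::real) (t::real). ennreal (if 0 < r \<and> 0 < t \<and> t \<le> b * r powr -\<gamma> then r * exp(-t) else 0))"
  have 1: "ennreal (indicator {0<..} r * ((1 - exp(-(b * r powr -\<gamma>))) * r)) = (\<integral>\<^sup>+t. f r t \<partial>lborel)" for r
  proof (cases "r > 0")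
    case True
    have "(\<integral>\<^sup>+t. f r t \<partial>lborel) = (\<integral>\<^sup>+t. ennreal r * ennreal (indicator {0<..b * r powr -\<gamma>} t * exp(-t)) \<partial>lborel)"
      using True by (intro nn_integral_cong) (auto simp: f_def indicator_def ennreal_mult')
    also have "\<dots> = ennreal r * ennreal (1 - exp(-(b * r powr -\<gamma>)))"
      using b True by (simp add: nn_integral_cmult L1)
    also have "\<dots> = ennreal (indicator {0<..} r * ((1 - exp(-(b * r powr -\<gamma>))) * r))"
      using b True by (simp add: ennreal_mult[symmetric] mult.commute)
    finally show ?thesis ..
  next
    case False
    then show ?thesis by (simp add: f_def)
  qed
  have meas: "case_prod f \<in> borel_measurable (lborel \<Otimes>\<^sub>M lborel)"
    unfolding f_def by measurable
  have 3: "(\<integral>\<^sup>+r. f r t \<partial>lborel) = ennreal (b powr (2/\<gamma>) / 2) * ennreal (indicator {0..} t * t powr ((1 - 2/\<gamma>) - 1) / exp t)" for t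
  proof (cases "t > 0")
    case True
    define R where "R = (b/t) powr (1/\<gamma>)"
    have R0: "R \<ge> 0" unfolding R_def by simp
    have "(\<integral>\<^sup>+r. f r t \<partial>lborel) = (\<integral>\<^sup>+r. ennreal (exp(-t)) * ennreal (indicator {0<..R} r * r) \<partial>lborel)"
      using True b g iff1[of _ t b \<gamma>]
      by (intro nn_integral_cong) (auto simp: f_def indicator_def R_def ennreal_mult' mult.commute)
    also have "\<dots> = ennreal (exp(-t)) * ennreal (R^2/2)"
      using R0 by (simp add: nn_integral_cmult inner_r)
    also have "R^2 = b powr (2/\<gamma>) * t powr (-2/\<gamma>)"
    proof -
      have "R^2 = (b/t) powr (2/\<gamma>)" unfolding R_def using True b
        by (simp add: powr_powr[symmetric] powr_realpow[symmetric] powr_powr)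
      also have "\<dots> = b powr (2/\<gamma>) * t powr (-2/\<gamma>)"
      proof -
        have "t powr (-2/\<gamma>) = 1 / t powr (2/\<gamma>)"
          using True by (simp add: powr_minus_divide[symmetric])
        then show ?thesis using True b by (simp add: powr_divide)
      qed
      finally show ?thesis .
    qed
    also have "ennreal (exp(-t)) * ennreal (b powr (2/\<gamma>) * t powr (-2/\<gamma>) / 2)
       = ennreal (b powr (2/\<gamma>) / 2) * ennreal (indicator {0..} t * t powr ((1 - 2/\<gamma>) - 1) / exp t)"
      using True b by (simp add: ennreal_mult[symmetric] exp_minus field_simps)
    finally show ?thesis .
  next
    case False
    then have "f r t = 0" for r by (simp add: f_def)
    moreover have "indicator {0..} t * t powr ((1 - 2/\<gamma>) - 1) / exp t = 0"
      using False by (cases "t = 0") (auto simp: indicator_def)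
    ultimately show ?thesis by simp
  qed
  have "(\<integral>\<^sup>+r. ennreal (indicator {0<..} r * ((1 - exp(-(b * r powr -\<gamma>))) * r)) \<partial>lborel)
      = (\<integral>\<^sup>+r. \<integral>\<^sup>+t. f r t \<partial>lborel \<partial>lborel)" by (simp add: 1)
  also have "\<dots> = (\<integral>\<^sup>+t. \<integral>\<^sup>+r. f r t \<partial>lborel \<partial>lborel)"
    by (rule lborel_pair.Fubini'[OF meas, symmetric])
  also have "\<dots> = (\<integral>\<^sup>+t. ennreal (b powr (2/\<gamma>) / 2) * ennreal (indicator {0..} t * t powr ((1 - 2/\<gamma>) - 1) / exp t) \<partial>lborel)"
    by (simp add: 3)
  also have "\<dots> = ennreal (b powr (2/\<gamma>) / 2) * ennreal (Gamma (1 - 2/\<gamma>))"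
    using g by (simp add: nn_integral_cmult Gamma_conv_nn_integral_real)
  also have "\<dots> = ennreal (b powr (2/\<gamma>) / 2 * Gamma (1 - 2/\<gamma>))"
    using g by (subst ennreal_mult) (auto intro!: Gamma_real_pos)
  finally show ?thesis .
qed


lemma iff2:
  fixes s t K q :: real assumes "s>0" "t>0" "K>0" "q>0"
  shows "K * s powr q \<le> t \<longleftrightarrow> s \<le> (t/K) powr (1/q)"
proof -
  have "K * s powr q \<le> t \<longleftrightarrow> s powr q \<le> t/K"
    using assms by (simp add: field_simps)
  also have "\<dots> \<longleftrightarrow> (s powr q) powr (1/q) \<le> (t/K) powr (1/q)"
    using assms by (subst powr_le_iff_base) auto
  also have "(s powr q) powr (1/q) = s" using assms by (simp add: powr_powr)
  finally show ?thesis .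
qed

lemma LC2:
  fixes K q :: real assumes K: "K > 0" and q: "q > 0"
  shows "(\<integral>\<^sup>+s. ennreal (indicator {0<..} s * exp(-(K * s powr q))) \<partial>lborel)
     = ennreal (K powr (-1/q) * Gamma (1/q + 1))"
proof -
  define f where "f = (\<lambda>(s::real) (t::real). ennreal (if 0 < s \<and> K * s powr q \<le> t then exp(-t) else 0))"
  have 1: "ennreal (indicator {0<..} s * exp(-(K * s powr q))) = (\<integral>\<^sup>+t. f s t \<partial>lborel)" for s
  proof (cases "s > 0")
    case True
    have "(\<integral>\<^sup>+t. f s t \<partial>lborel) = (\<integral>\<^sup>+t. ennreal (indicator {K * s powr q..} t * exp(-t)) \<partial>lborel)"
      using True by (intro nn_integral_cong) (auto simp: f_def indicator_def)
    also have "\<dots> = ennreal (exp(-(K * s powr q)))" by (rule L2)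
    finally show ?thesis using True by simp
  next
    case False
    then show ?thesis by (simp add: f_def)
  qed
  have meas: "case_prod f \<in> borel_measurable (lborel \<Otimes>\<^sub>M lborel)"
    unfolding f_def by measurable
  have 3: "(\<integral>\<^sup>+s. f s t \<partial>lborel) = ennreal (K powr (-1/q)) * ennreal (indicator {0..} t * t powr ((1/q + 1) - 1) / exp t)" for t
  proof (cases "t > 0")
    case True
    define R where "R = (t/K) powr (1/q)"
    have R0: "R \<ge> 0" unfolding R_def by simp
    have "(\<integral>\<^sup>+s. f s t \<partial>lborel) = (\<integral>\<^sup>+s. ennreal (exp(-t)) * indicator {0<..R} s \<partial>lborel)"
      using True K q iff2[of _ t K q]
      by (intro nn_integral_cong) (auto simp: f_def indicator_def R_def)
    also have "\<dots> = ennreal (exp(-t)) * ennreal R"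
      using R0 by (simp add: nn_integral_cmult_indicator)
    also have "R = K powr (-1/q) * t powr (1/q)"
    proof -
      have "K powr (-1/q) = 1 / K powr (1/q)"
        using K by (simp add: powr_minus_divide[symmetric])
      then show ?thesis unfolding R_def using True K by (simp add: powr_divide)
    qed
    also have "ennreal (exp(-t)) * ennreal (K powr (-1/q) * t powr (1/q))
       = ennreal (K powr (-1/q)) * ennreal (indicator {0..} t * t powr ((1/q + 1) - 1) / exp t)"
      using True K by (simp add: ennreal_mult[symmetric] exp_minus field_simps)
    finally show ?thesis .
  next
    case False
    have "f s t = 0" for s
    proof -
      have "s > 0 \<Longrightarrow> K * s powr q > 0" using K by simp
      then show ?thesis using False by (auto simp: f_def)
    qed
    moreover have "indicator {0..} t * t powr ((1/q + 1) - 1) / exp t = 0"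
      using False by (cases "t = 0") (auto simp: indicator_def)
    ultimately show ?thesis by simp
  qed
  have "(\<integral>\<^sup>+s. ennreal (indicator {0<..} s * exp(-(K * s powr q))) \<partial>lborel)
      = (\<integral>\<^sup>+s. \<integral>\<^sup>+t. f s t \<partial>lborel \<partial>lborel)" by (simp add: 1)
  also have "\<dots> = (\<integral>\<^sup>+t. \<integral>\<^sup>+s. f s t \<partial>lborel \<partial>lborel)"
    by (rule lborel_pair.Fubini'[OF meas, symmetric])
  also have "\<dots> = (\<integral>\<^sup>+t. ennreal (K powr (-1/q)) * ennreal (indicator {0..} t * t powr ((1/q + 1) - 1) / exp t) \<partial>lborel)"
    by (simp add: 3)
  also have "\<dots> = ennreal (K powr (-1/q)) * ennreal (Gamma (1/q + 1))"
  proof -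
    have "1/q+1 > 0" using q by (smt (verit) divide_pos_pos)
    from Gamma_conv_nn_integral_real[OF this] show ?thesis by (simp add: nn_integral_cmult)
  qed
  also have "\<dots> = ennreal (K powr (-1/q) * Gamma (1/q + 1))"
  proof -
    have "1/q+1 > 0" using q by (smt (verit) divide_pos_pos)
    then have "Gamma (1/q+1) > 0" by (rule Gamma_real_pos)
    then show ?thesis by (subst ennreal_mult) auto
  qed
  finally show ?thesis .
qed




lemma ftc_piece:
  fixes s a \<gamma> :: real
  assumes s: "s > 0" and a: "a > 0" and g: "\<gamma> > 2"
  shows "set_integrable lborel {0<..} (\<lambda>r. s*\<gamma>^2 * r powr (-\<gamma>-1) * exp(-(s*a*r powr -\<gamma>)))"
    and "(\<integral>r\<in>{0<..}. s*\<gamma>^2 * r powr (-\<gamma>-1) * exp(-(s*a*r powr -\<gamma>)) \<partial>lborel) = \<gamma>/a"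
proof -
  define F where "F = (\<lambda>r::real. \<gamma>/a * exp(-(s*a*r powr -\<gamma>)))"
  have D: "DERIV F x :> s*\<gamma>^2 * x powr (-\<gamma>-1) * exp(-(s*a*x powr -\<gamma>))" if "0 < ereal x" "ereal x < \<infinity>" for x
  proof -
    from that have x: "x > 0" by simp
    show ?thesis unfolding F_def using x a
      apply (auto intro!: derivative_eq_intros simp: power2_eq_square)
      done
  qed
  have C: "isCont (\<lambda>x. s*\<gamma>^2 * x powr (-\<gamma>-1) * exp(-(s*a*x powr -\<gamma>))) x" if "0 < ereal x" "ereal x < \<infinity>" for x
    using that by (auto intro!: continuous_intros)
  have L0: "((F \<circ> real_of_ereal) \<longlongrightarrow> 0) (at_right 0)"
  proof -
    have "(F \<longlongrightarrow> 0) (at_right 0)" unfolding F_def using s a g by real_asymp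
    then show ?thesis unfolding zero_ereal_def ereal_tendsto_simps .
  qed
  have L1: "((F \<circ> real_of_ereal) \<longlongrightarrow> \<gamma>/a) (at_left \<infinity>)"
  proof -
    have "(F \<longlongrightarrow> \<gamma>/a) at_top" unfolding F_def using s a g by real_asymp
    then show ?thesis unfolding ereal_tendsto_simps .
  qed
  have nn: "AE x in lborel. 0 < ereal x \<longrightarrow> ereal x < \<infinity> \<longrightarrow> 0 \<le> s*\<gamma>^2 * x powr (-\<gamma>-1) * exp(-(s*a*x powr -\<gamma>))"
    using s by auto
  note R = interval_integral_FTC_nonneg[where a=0 and b=\<infinity>, OF _ D C nn L0 L1]
  show "set_integrable lborel {0<..} (\<lambda>r. s*\<gamma>^2 * r powr (-\<gamma>-1) * exp(-(s*a*r powr -\<gamma>)))"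
    using R(1) by (simp add: zero_ereal_def)
  show "(\<integral>r\<in>{0<..}. s*\<gamma>^2 * r powr (-\<gamma>-1) * exp(-(s*a*r powr -\<gamma>)) \<partial>lborel) = \<gamma>/a"
    using R(2) by (simp add: zero_ereal_def interval_integral_to_infinity_eq)
qed

lemma nn2set:
  fixes f :: "real \<Rightarrow> real"
  assumes "f \<in> borel_measurable borel" "\<And>x. x \<in> A \<Longrightarrow> 0 \<le> f x" "A \<in> sets borel"
    "(\<integral>\<^sup>+x. ennreal (indicator A x * f x) \<partial>lborel) = ennreal v" "0 \<le> v"
  shows "set_integrable lborel A f \<and> (\<integral>x\<in>A. f x \<partial>lborel) = v"
proof -
  have m: "(\<lambda>x. indicator A x *\<^sub>R f x) \<in> borel_measurable lborel"
    using assms(1,3) by measurable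
  have "(\<integral>\<^sup>+x. ennreal (indicator A x *\<^sub>R f x) \<partial>lborel) = ennreal v" using assms(4) by simp
  then have "integrable lborel (\<lambda>x. indicator A x *\<^sub>R f x) \<and> integral\<^sup>L lborel (\<lambda>x. indicator A x *\<^sub>R f x) = v"
    by (subst (asm) nn_integral_eq_integrable[OF m]) (use assms in \<open>auto simp: indicator_def\<close>)
  then show ?thesis by (simp add: set_integrable_def set_lebesgue_integral_def)
qed

lemma set_integral_strict:
  fixes f g :: "real \<Rightarrow> real"
  assumes fi: "set_integrable lborel {0<..} f" and gi: "set_integrable lborel {0<..} g"
    and lt: "\<And>x. x > 0 \<Longrightarrow> f x < g x"
  shows "(\<integral>x\<in>{0<..}. f x \<partial>lborel) < (\<integral>x\<in>{0<..}. g x \<partial>lborel)"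
proof -
  define h where "h = (\<lambda>x. indicator {0<..} x *\<^sub>R (g x - f x))"
  have hi: "integrable lborel h"
    using set_integral_diff(1)[OF gi fi] by (simp add: h_def set_integrable_def)
  have hint: "integral\<^sup>L lborel h = (\<integral>x\<in>{0<..}. g x \<partial>lborel) - (\<integral>x\<in>{0<..}. f x \<partial>lborel)"
    using set_integral_diff(2)[OF gi fi] by (simp add: h_def set_lebesgue_integral_def)
  have hnn: "AE x in lborel. 0 \<le> h x"
    using lt by (auto simp: h_def indicator_def less_imp_le)
  have "integral\<^sup>L lborel h \<noteq> 0"
  proof
    assume "integral\<^sup>L lborel h = 0"
    then have ae0: "AE x in lborel. h x = 0" using integral_nonneg_eq_0_iff_AE[OF hi hnn] by simp
    have imp: "\<forall>x. h x = 0 \<longrightarrow> x \<le> 0"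
    proof (intro allI impI)
      fix x assume hx: "h x = 0"
      show "x \<le> 0"
      proof (rule ccontr)
        assume "\<not> x \<le> 0"
        then have "x > 0" by simp
        then have "h x = g x - f x" by (simp add: h_def)
        with hx lt[OF \<open>x > 0\<close>] show False by simp
      qed
    qed
    have "AE x in lborel. (x::real) \<le> 0"
      using ae0 by (rule eventually_mono) (use imp in blast)
    then obtain N where N: "{x \<in> space lborel. \<not> x \<le> (0::real)} \<subseteq> N" "emeasure lborel N = 0" "N \<in> sets lborel"
      by (rule AE_E)
    have "{0<..(1::real)} \<subseteq> N" using N(1) by auto
    then have "emeasure lborel {0<..(1::real)} \<le> emeasure lborel N" using N(3) by (intro emeasure_mono) auto
    then show False using N(2) by simp
  qed
  moreover have "integral\<^sup>L lborel h \<ge> 0" using hnn by (rule integral_nonneg_AE)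
  ultimately show ?thesis using hint by linarith
qed




lemma meas_p: "(\<lambda>r::real. (1 - exp(-(s*a*r powr -\<gamma>))) * r) \<in> borel_measurable borel"
  by measurable
lemma meas_z: "(\<lambda>r::real. (1 - exp (- s * gfun \<gamma> c We r)) * r) \<in> borel_measurable borel"
  unfolding gfun_def by measurable


lemma pw2: "r > (0::real) \<Longrightarrow> r powr (-\<gamma>-2) * r^2 = r powr -\<gamma>"
proof -
  assume r: "r > 0"
  have "r powr (-\<gamma>-2) * r^2 = r powr (-\<gamma>-2) * r powr 2" using r by (simp add: powr_numeral)
  also have "\<dots> = r powr (-\<gamma>-2+2)" by (rule powr_add[symmetric])
  also have "-\<gamma>-2+2 = -\<gamma>" by simp
  finally show ?thesis .
qed
lemma pw1: "r > (0::real) \<Longrightarrow> r powr (-\<gamma>-2) * r = r powr (-\<gamma>-1)"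
proof -
  assume r: "r > 0"
  have "r powr (-\<gamma>-2) * r = r powr (-\<gamma>-2) * r powr 1" using r by simp
  also have "\<dots> = r powr (-\<gamma>-2+1)" by (rule powr_add[symmetric])
  also have "-\<gamma>-2+1 = -\<gamma>-1" by simp
  finally show ?thesis .
qed

lemma exp_strict: fixes d :: real assumes "d > 0" shows "1 - d < exp (-d)"
proof (cases "d \<le> 2")
  case True
  have "exp (-d) = exp (-d/2)^2" by (simp add: exp_double[symmetric])
  also have "(1 - d/2)^2 \<le> exp (-d/2)^2"
    using True exp_ge_add_one_self[of "-d/2"] by (intro power_mono) auto
  finally have "(1 - d/2)^2 \<le> exp (-d)" .
  moreover have "1 - d < (1 - d/2)^2" using assms by (simp add: power2_eq_square algebra_simps)
  ultimately show ?thesis by linarith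
next
  case False
  then show ?thesis using exp_gt_zero[of "-d"] by linarith
qed

lemma main_bounds:
  fixes lam \<gamma> c \<rho> We :: real
  assumes lam: "lam > 0" and g: "\<gamma> > 2" and c: "c > 0" and rho: "\<rho> > 0" and We: "We > 0"
  shows "(1 - pi * lam * c^2 * \<gamma> / (2 * We)) * CRB_LBW lam \<gamma> c \<rho> We < CRB_LB lam \<gamma> c \<rho> We
       \<and> CRB_LB lam \<gamma> c \<rho> We < CRB_LBW lam \<gamma> c \<rho> We \<and> CRB_LBW lam \<gamma> c \<rho> We > 0"
proof -
  define a where "a = 4 * We / c^2"
  have a: "a > 0" using We c by (simp add: a_def)
  define G where "G = Gamma (1 - 2/\<gamma>)"
  have G: "G > 0" unfolding G_def using g by (intro Gamma_real_pos) (simp add: field_simps)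
  define p where "p = (\<lambda>s r. (1 - exp(-(s*a*r powr -\<gamma>))) * r)"
  define hh where "hh = (\<lambda>s r. s*\<gamma>^2 * r powr (-\<gamma>-1) * exp(-(s*a*r powr -\<gamma>)))"
  define z where "z = (\<lambda>s r. (1 - exp (- s * gfun \<gamma> c We r)) * r)"
  define Z where "Z = Zfun \<gamma> c We"
  have Zz: "Z s = (\<integral>r\<in>{0<..}. z s r \<partial>lborel)" for s by (simp add: Z_def Zfun_def z_def)
  have pm[measurable]: "p s \<in> borel_measurable borel" for s using meas_p[of s a \<gamma>] by (simp add: p_def)
  have zm[measurable]: "z s \<in> borel_measurable borel" for s using meas_z[of s \<gamma> c We] by (simp add: z_def)
  have pI: "set_integrable lborel {0<..} (p s) \<and> (\<integral>r\<in>{0<..}. p s r \<partial>lborel) = (s*a) powr (2/\<gamma>) / 2 * G"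
    if s: "s > 0" for s
  proof (rule nn2set)
    show "\<And>x. x \<in> {0<..} \<Longrightarrow> 0 \<le> p s x" using s a by (auto simp: p_def)
    show "(\<integral>\<^sup>+x. ennreal (indicator {0<..} x * p s x) \<partial>lborel) = ennreal ((s*a) powr (2/\<gamma>) / 2 * G)"
      unfolding p_def G_def using LC1[of "s*a" \<gamma>] s a g by simp
    show "0 \<le> (s*a) powr (2/\<gamma>) / 2 * G" using G by simp
  qed auto
  have hI: "set_integrable lborel {0<..} (hh s) \<and> (\<integral>r\<in>{0<..}. hh s r \<partial>lborel) = \<gamma>/a"
    if s: "s > 0" for s
    using ftc_piece[OF s a g] by (simp add: hh_def)
  have pw: "p s r < z s r \<and> z s r \<le> p s r + hh s r \<and> 0 \<le> p s r" if s: "s > 0" and r: "r > 0" for s r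
  proof -
    define x where "x = s*a*r powr -\<gamma>"
    define y where "y = s*\<gamma>^2*r powr (-\<gamma>-2)"
    have y: "y > 0" using s r g by (simp add: y_def)
    have x: "x \<ge> 0" using s r a by (simp add: x_def)
    have "r powr (-\<gamma>-2) * r^2 = r powr -\<gamma>"
      using r by (rule pw2)
    then have sg: "s * gfun \<gamma> c We r = x + y"
      unfolding gfun_def x_def y_def a_def by (simp add: algebra_simps)
    have yr: "y * r = s*\<gamma>^2 * r powr (-\<gamma>-1)"
    proof -
      have "r powr (-\<gamma>-2) * r = r powr (-\<gamma>-1)"
        using r by (rule pw1)
      then show ?thesis unfolding y_def by (simp add: algebra_simps)
    qed
    have zz: "z s r = (1 - exp(-x) * exp(-y)) * r"
      unfolding z_def using sg by (simp add: exp_add[symmetric])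
    have pp: "p s r = (1 - exp(-x)) * r" unfolding p_def x_def by simp
    have hhh: "hh s r = exp(-x) * (y * r)" unfolding hh_def x_def yr by simp
    have e1: "exp(-y) < 1" using y by simp
    have e2: "1 - y \<le> exp(-y)" using exp_ge_add_one_self[of "-y"] by simp
    have ex: "exp(-x) > 0" by simp
    have "p s r < z s r"
      unfolding zz pp using r ex e1 by (simp add: mult_strict_right_mono)
    moreover have "z s r \<le> p s r + hh s r"
    proof -
      have "exp(-x) * (1 - y) \<le> exp(-x) * exp(-y)" using e2 ex by simp
      then have "(1 - exp(-x) * exp(-y)) \<le> (1 - exp(-x)) + exp(-x) * y" by (simp add: algebra_simps)
      then have "(1 - exp(-x) * exp(-y)) * r \<le> ((1 - exp(-x)) + exp(-x) * y) * r"
        using r by (intro mult_right_mono) auto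
      then show ?thesis unfolding zz pp hhh by (simp add: algebra_simps)
    qed
    moreover have "0 \<le> p s r" unfolding pp using x r by simp
    ultimately show ?thesis by simp
  qed
  have zI: "set_integrable lborel {0<..} (z s)" if s: "s > 0" for s
  proof (rule set_integrable_bound[where f="\<lambda>r. p s r + hh s r"])
    show "set_integrable lborel {0<..} (\<lambda>r. p s r + hh s r)"
      using pI[OF s] hI[OF s] by (intro set_integral_add) auto
    show "set_borel_measurable lborel {0<..} (z s)"
      unfolding set_borel_measurable_def by measurable
    show "AE x in lborel. x \<in> {0<..} \<longrightarrow> norm (z s x) \<le> norm (p s x + hh s x)"
    proof (rule AE_I2, rule impI)
      fix x :: real assume "x \<in> {0<..}"
      then have "p s x < z s x \<and> z s x \<le> p s x + hh s x \<and> 0 \<le> p s x" using pw[OF s] by simp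
      then show "norm (z s x) \<le> norm (p s x + hh s x)" by simp
    qed
  qed
  have Zgt: "Z s > (s*a) powr (2/\<gamma>) / 2 * G" if s: "s > 0" for s
  proof -
    have "(\<integral>r\<in>{0<..}. p s r \<partial>lborel) < (\<integral>r\<in>{0<..}. z s r \<partial>lborel)"
      using pI[OF s] zI[OF s] pw[OF s] by (intro set_integral_strict) auto
    then show ?thesis using pI[OF s] Zz[of s] by simp
  qed
  have Zle: "Z s \<le> (s*a) powr (2/\<gamma>) / 2 * G + \<gamma>/a" if s: "s > 0" for s
  proof -
    have "(\<integral>r\<in>{0<..}. z s r \<partial>lborel) \<le> (\<integral>r\<in>{0<..}. p s r + hh s r \<partial>lborel)"
      using pI[OF s] hI[OF s] zI[OF s] pw[OF s] by (intro set_integral_mono) auto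
    also have "\<dots> = (\<integral>r\<in>{0<..}. p s r \<partial>lborel) + (\<integral>r\<in>{0<..}. hh s r \<partial>lborel)"
      using pI[OF s] hI[OF s] by (intro set_integral_add(2)) auto
    finally show ?thesis using pI[OF s] hI[OF s] Zz[of s] by simp
  qed
  have Zmono: "mono_on {0<..} Z"
  proof (rule mono_onI)
    fix s1 s2 :: real assume s1: "s1 \<in> {0<..}" and s2: "s2 \<in> {0<..}" and le: "s1 \<le> s2"
    have "(\<integral>r\<in>{0<..}. z s1 r \<partial>lborel) \<le> (\<integral>r\<in>{0<..}. z s2 r \<partial>lborel)"
    proof (rule set_integral_mono)
      show "set_integrable lborel {0<..} (z s1)" "set_integrable lborel {0<..} (z s2)"
        using zI s1 s2 by auto
      fix r :: real assume r: "r \<in> {0<..}"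
      have "gfun \<gamma> c We r > 0" using r g c We unfolding gfun_def by (intro mult_pos_pos add_pos_nonneg) auto
      then have "s1 * gfun \<gamma> c We r \<le> s2 * gfun \<gamma> c We r" using le by (intro mult_right_mono) auto
      then show "z s1 r \<le> z s2 r" unfolding z_def using r by (intro mult_right_mono) auto
    qed
    then show "Z s1 \<le> Z s2" by (simp add: Zz)
  qed
  define K where "K = pi * lam * G * a powr (2/\<gamma>)"
  have K: "K > 0" using lam G a by (simp add: K_def)
  define EW where "EW = (\<lambda>s. exp (-(K * s powr (2/\<gamma>))))"
  define E where "E = (\<lambda>s. exp (- 2 * pi * lam * Z s))"
  define \<delta> where "\<delta> = 2 * pi * lam * \<gamma> / a"
  have \<delta>: "\<delta> > 0" using lam g a by (simp add: \<delta>_def)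
  have ZWeq: "2 * pi * lam * ((s*a) powr (2/\<gamma>) / 2 * G) = K * s powr (2/\<gamma>)" if s: "s > 0" for s
    using s a by (simp add: K_def powr_mult)
  have Eub: "E s < EW s" if s: "s > 0" for s
  proof -
    have "2 * pi * lam * ((s*a) powr (2/\<gamma>) / 2 * G) < 2 * pi * lam * Z s"
      using Zgt[OF s] lam by (intro mult_strict_left_mono) auto
    with ZWeq[OF s] have "K * s powr (2/\<gamma>) < 2 * pi * lam * Z s" by linarith
    then show ?thesis unfolding E_def EW_def by simp
  qed
  have Elb: "exp (-\<delta>) * EW s \<le> E s" if s: "s > 0" for s
  proof -
    have "2 * pi * lam * Z s \<le> 2 * pi * lam * ((s*a) powr (2/\<gamma>) / 2 * G + \<gamma>/a)"
      using Zle[OF s] lam by (intro mult_left_mono) auto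
    also have "\<dots> = K * s powr (2/\<gamma>) + \<delta>"
      using ZWeq[OF s] by (simp add: \<delta>_def algebra_simps)
    finally have "-\<delta> + -(K * s powr (2/\<gamma>)) \<le> - 2 * pi * lam * Z s" by simp
    then show ?thesis unfolding E_def EW_def by (simp add: exp_add[symmetric])
  qed
  have EWm: "EW \<in> borel_measurable borel" unfolding EW_def by measurable
  have EWI: "set_integrable lborel {0<..} EW \<and> (\<integral>s\<in>{0<..}. EW s \<partial>lborel) = K powr (-\<gamma>/2) * Gamma (\<gamma>/2 + 1)"
  proof (rule nn2set[OF EWm])
    have q: "2/\<gamma> > 0" using g by simp
    show "(\<integral>\<^sup>+x. ennreal (indicator {0<..} x * EW x) \<partial>lborel) = ennreal (K powr (-\<gamma>/2) * Gamma (\<gamma>/2 + 1))"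
      using LC2[OF K q] g by (simp add: EW_def)
    show "0 \<le> K powr (-\<gamma>/2) * Gamma (\<gamma>/2 + 1)" using g by (auto intro!: Gamma_real_pos less_imp_le)
  qed (auto simp: EW_def)
  have Zm: "Z \<in> borel_measurable (restrict_space borel {0<..})"
    by (rule borel_measurable_mono_on_fnc[OF Zmono])
  have Em: "E \<in> borel_measurable (restrict_space borel {0<..})"
    unfolding E_def using Zm by measurable
  have Em2: "(\<lambda>x. indicator {0<..} x *\<^sub>R E x) \<in> borel_measurable borel"
    using Em by (subst (asm) borel_measurable_restrict_space_iff) auto
  have EI: "set_integrable lborel {0<..} E"
  proof (rule set_integrable_bound[where f=EW])
    show "set_integrable lborel {0<..} EW" using EWI by simp
    show "set_borel_measurable lborel {0<..} E"
      unfolding set_borel_measurable_def using Em2 by (simp add: measurable_cong_sets[OF sets_lborel refl])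
    show "AE x in lborel. x \<in> {0<..} \<longrightarrow> norm (E x) \<le> norm (EW x)"
    proof (rule AE_I2, rule impI)
      fix x :: real assume "x \<in> {0<..}"
      then have "E x < EW x" using Eub by simp
      moreover have "E x > 0" by (simp add: E_def)
      ultimately show "norm (E x) \<le> norm (EW x)" by simp
    qed
  qed
  have less: "(\<integral>s\<in>{0<..}. E s \<partial>lborel) < (\<integral>s\<in>{0<..}. EW s \<partial>lborel)"
    using EI EWI Eub by (intro set_integral_strict) auto
  have ge: "exp (-\<delta>) * (\<integral>s\<in>{0<..}. EW s \<partial>lborel) \<le> (\<integral>s\<in>{0<..}. E s \<partial>lborel)"
  proof -
    have "(\<integral>s\<in>{0<..}. exp (-\<delta>) * EW s \<partial>lborel) \<le> (\<integral>s\<in>{0<..}. E s \<partial>lborel)"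
      using EI EWI Elb by (intro set_integral_mono) auto
    then show ?thesis by simp
  qed
  have LB: "CRB_LB lam \<gamma> c \<rho> We = 4 / \<rho> * (\<integral>s\<in>{0<..}. E s \<partial>lborel)"
    by (simp add: CRB_LB_def E_def Z_def)
  have W: "CRB_LBW lam \<gamma> c \<rho> We = 4 / \<rho> * (K powr (-\<gamma>/2) * Gamma (\<gamma>/2 + 1))"
  proof -
    have "K powr (-\<gamma>/2) = (pi * lam) powr (-\<gamma>/2) * G powr (-\<gamma>/2) * (a powr (2/\<gamma>)) powr (-\<gamma>/2)"
      unfolding K_def using lam G a by (simp add: powr_mult)
    also have "(a powr (2/\<gamma>)) powr (-\<gamma>/2) = 1 / a"
      using a g by (simp add: powr_powr powr_minus_divide)
    finally have "K powr (-\<gamma>/2) = (pi * lam) powr (-\<gamma>/2) * G powr (-\<gamma>/2) / a" by simp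
    then show ?thesis unfolding CRB_LBW_def G_def a_def using We c rho
      by (simp add: field_simps add.commute)
  qed
  have Wpos: "K powr (-\<gamma>/2) * Gamma (\<gamma>/2 + 1) > 0" using K g by (auto intro!: Gamma_real_pos)
  have dd: "\<delta> = pi * lam * c^2 * \<gamma> / (2 * We)"
    unfolding \<delta>_def a_def using c We by (simp add: field_simps)
  have "(1 - \<delta>) * CRB_LBW lam \<gamma> c \<rho> We < exp (-\<delta>) * CRB_LBW lam \<gamma> c \<rho> We"
    using exp_strict[OF \<delta>] Wpos rho W by (intro mult_strict_right_mono) auto
  also have "\<dots> \<le> CRB_LB lam \<gamma> c \<rho> We"
  proof -
    have "exp (-\<delta>) * (K powr (-\<gamma>/2) * Gamma (\<gamma>/2 + 1)) \<le> (\<integral>s\<in>{0<..}. E s \<partial>lborel)"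
      using ge EWI by simp
    then have "4 / \<rho> * (exp (-\<delta>) * (K powr (-\<gamma>/2) * Gamma (\<gamma>/2 + 1))) \<le> 4 / \<rho> * (\<integral>s\<in>{0<..}. E s \<partial>lborel)"
      using rho by (intro mult_left_mono) auto
    then show ?thesis unfolding W LB by (simp only: mult.left_commute[of "exp (-\<delta>)"])
  qed
  finally have 1: "(1 - \<delta>) * CRB_LBW lam \<gamma> c \<rho> We < CRB_LB lam \<gamma> c \<rho> We" .
  have 2: "CRB_LB lam \<gamma> c \<rho> We < CRB_LBW lam \<gamma> c \<rho> We"
  proof -
    have "(\<integral>s\<in>{0<..}. E s \<partial>lborel) < K powr (-\<gamma>/2) * Gamma (\<gamma>/2 + 1)" using less EWI by simp
    then show ?thesis unfolding W LB using rho by (intro mult_strict_left_mono) auto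
  qed
  have 3: "CRB_LBW lam \<gamma> c \<rho> We > 0" unfolding W using Wpos rho by simp
  show ?thesis using 1 2 3 dd by simp
qed



theorem corollary1:
  fixes lam \<gamma> c \<rho> :: real
  assumes "lam > 0" and "\<gamma> > 2" and "c > 0" and "\<rho> > 0"
  shows "(\<forall>We>0.
            (1 - pi * lam * c^2 * \<gamma> / (2 * We)) * CRB_LBW lam \<gamma> c \<rho> We < CRB_LB lam \<gamma> c \<rho> We
          \<and> CRB_LB lam \<gamma> c \<rho> We < CRB_LBW lam \<gamma> c \<rho> We)
       \<and> ((\<lambda>We. CRB_LB lam \<gamma> c \<rho> We / CRB_LBW lam \<gamma> c \<rho> We) \<longlongrightarrow> 1) at_top
       \<and> (\<lambda>We. CRB_LB lam \<gamma> c \<rho> We / CRB_LBW lam \<gamma> c \<rho> We - 1) \<in> O[at_top](\<lambda>We. 1 / We)"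
proof -
  define C where "C = pi * lam * c^2 * \<gamma> / 2"
  have C: "C > 0" using assms by (simp add: C_def)
  define R where "R = (\<lambda>We. CRB_LB lam \<gamma> c \<rho> We / CRB_LBW lam \<gamma> c \<rho> We)"
  have Rb: "1 - C / We < R We \<and> R We < 1" if We: "We > 0" for We
  proof -
    from main_bounds[OF assms We] have
      b1: "(1 - pi * lam * c^2 * \<gamma> / (2 * We)) * CRB_LBW lam \<gamma> c \<rho> We < CRB_LB lam \<gamma> c \<rho> We"
      and b2: "CRB_LB lam \<gamma> c \<rho> We < CRB_LBW lam \<gamma> c \<rho> We" and b3: "CRB_LBW lam \<gamma> c \<rho> We > 0"
      by auto
    have e: "pi * lam * c^2 * \<gamma> / (2 * We) = C / We" by (simp add: C_def)
    show ?thesis unfolding R_def using b1 b2 b3 e by (simp add: pos_less_divide_eq divide_less_eq)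
  qed
  have part1: "\<forall>We>0. (1 - pi * lam * c^2 * \<gamma> / (2 * We)) * CRB_LBW lam \<gamma> c \<rho> We < CRB_LB lam \<gamma> c \<rho> We
          \<and> CRB_LB lam \<gamma> c \<rho> We < CRB_LBW lam \<gamma> c \<rho> We"
    using main_bounds[OF assms] by blast
  have ev: "eventually (\<lambda>We. 1 - C / We < R We \<and> R We < 1) at_top"
    using eventually_gt_at_top[of 0] by eventually_elim (use Rb in auto)
  have lim1: "((\<lambda>We. 1 - C / We) \<longlongrightarrow> 1) at_top" by real_asymp
  have part2: "(R \<longlongrightarrow> 1) at_top"
  proof (rule tendsto_sandwich[OF _ _ lim1 tendsto_const])
    show "eventually (\<lambda>We. 1 - C / We \<le> R We) at_top" using ev by eventually_elim auto
    show "eventually (\<lambda>We. R We \<le> 1) at_top" using ev by eventually_elim auto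
  qed
  have part3: "(\<lambda>We. R We - 1) \<in> O[at_top](\<lambda>We. 1 / We)"
  proof (rule bigoI[where c=C])
    show "eventually (\<lambda>We. norm (R We - 1) \<le> C * norm (1 / We)) at_top"
      using ev eventually_gt_at_top[of 0]
    proof eventually_elim
      case (elim We)
      then show ?case by (simp add: abs_if)
    qed
  qed
  show ?thesis using part1 part2 part3 unfolding R_def by blast
qed


end
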